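(* In Algorithm 1 (described in the context), every time a triplet $(\mathrm{dist},\mathrm{seed},v_0)$ is popped from $Q$ the following hold: (1) if $\mathrm{seed}\in\mathrm{NLV}(v_0,k)$ then $\mathrm{dist}=d_G(\mathrm{seed},v_0)$; (2) every pair $(s,v)\in\mathcal L\times V$ with $d_G(s,v)<\mathrm{dist}$ and $s\in\mathrm{NLV}(v,k)$ belongs to the visited set.
   Context: $d_G$ is the shortest-path distance in $G$; $\mathrm{NLV}(v,k)$ is the set of $k$ nearest labeled vertices to $v$ with respect to $d_G$. Algorithm 1: input an undirected graph $G=(V,E,w)$ with non-negative weights, a set $\mathcal L\subseteq V$ of labeled vertices, and an integer $k\ge1$. It maintains a min-priority queue $Q$ of pairs $(\mathrm{seed},v)\in\mathcal L\times V$ with priorities (a popped pair with priority $\mathrm{dist}$ is the triplet $(\mathrm{dist},\mathrm{seed},v)$), and for each $v\in V$ a list kNN$[v]$ (initially empty) and a set $S_v$ (initially empty); the visited set is $\{(s,v): s\in S_v\}$. Initially, for each $s\in\mathcal L$, $(s,s)$ is inserted with priority $0$. While $Q$ is nonempty: pop the pair $(\mathrm{seed},v_0)$ of minimum priority $\mathrm{dist}$; add $\mathrm{seed}$ to $S_{v_0}$; if kNN$[v_0]$ has fewer than $k$ entries, append $(\mathrm{dist},\mathrm{seed})$ to kNN$[v_0]$ and, for every neighbour $v$ of $v_0$ such that kNN$[v]$ has fewer than $k$ entries and $\mathrm{seed}\notin S_v$, perform decrease-or-insert of $(\mathrm{seed},v)$ with priority $\mathrm{dist}+w(v_0,v)$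 (if the pair is in $Q$ its priority is lowered to this value when smaller; otherwise it is inserted). *)

theory Defs
  imports "HOL-Library.Extended_Real"
begin

definition is_walk :: "'a set \<Rightarrow> ('a \<times> 'a) set \<Rightarrow> 'a list \<Rightarrow> bool" where
  "is_walk V E p \<longleftrightarrow> p \<noteq> [] \<and> set p \<subseteq> V \<and>
     (\<forall>i. Suc i < length p \<longrightarrow> (p ! i, p ! Suc i) \<in> E)"

definition walk_weight :: "('a \<Rightarrow> 'a \<Rightarrow> real) \<Rightarrow> 'a list \<Rightarrow> real" where
  "walk_weight w p = sum_list (map (\<lambda>(a, b). w a b) (zip p (tl p)))"

text \<open>Shortest-path distance d_G (infinite if no walk exists).\<close>
definition sp_dist :: "'a set \<Rightarrow> ('a \<times> 'a) set \<Rightarrow> ('a \<Rightarrow> 'a \<Rightarrow> real) \<Rightarrow> 'a \<Rightarrow> 'a \<Rightarrow> ereal" where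
  "sp_dist V E w u v =
     (INF p \<in> {p. is_walk V E p \<and> hd p = u \<and> last p = v}. ereal (walk_weight w p))"

text \<open>Ties are resolved strictly:
  s is among the k nearest iff at most k labeled vertices (s included) are at distance
  no larger than d_G(s,v). Without ties this is exactly the set of the k nearest.\<close>
definition NLV :: "'a set \<Rightarrow> ('a \<times> 'a) set \<Rightarrow> ('a \<Rightarrow> 'a \<Rightarrow> real) \<Rightarrow> 'a set \<Rightarrow> 'a \<Rightarrow> nat \<Rightarrow> 'a set" where
  "NLV V E w L v k =
     {s \<in> L. card {s' \<in> L. sp_dist V E w s' v \<le> sp_dist V E w s v} \<le> k}"

text \<open>State of Algorithm 1: priority queue Q (partial map from pairs (seed,v) to priorities),
  the lists kNN[v], and the sets S_v.\<close>
record 'a kstate =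
  Qu :: "('a \<times> 'a) \<Rightarrow> real option"
  kNN :: "'a \<Rightarrow> (real \<times> 'a) list"
  Sv :: "'a \<Rightarrow> 'a set"

definition init_state :: "'a set \<Rightarrow> 'a kstate" where
  "init_state L = \<lparr>Qu = (\<lambda>(s, v). if s \<in> L \<and> v = s then Some 0 else None),
                   kNN = (\<lambda>_. []), Sv = (\<lambda>_. {})\<rparr>"

definition can_pop :: "'a kstate \<Rightarrow> real \<Rightarrow> 'a \<Rightarrow> 'a \<Rightarrow> bool" where
  "can_pop st d seed v0 \<longleftrightarrow> Qu st (seed, v0) = Some d \<and>
     (\<forall>p d'. Qu st p = Some d' \<longrightarrow> d \<le> d')"

text \<open>One iteration of the while loop after popping (dist,seed,v0) = (d,seed,v0).
  The neighbour updates concern distinct keys (seed,v), so they are performed simultaneously.\<close>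
definition after_pop :: "('a \<times> 'a) set \<Rightarrow> ('a \<Rightarrow> 'a \<Rightarrow> real) \<Rightarrow> nat \<Rightarrow> 'a kstate \<Rightarrow>
    real \<Rightarrow> 'a \<Rightarrow> 'a \<Rightarrow> 'a kstate" where
  "after_pop E w k st d seed v0 =
     (let S' = (Sv st)(v0 := insert seed (Sv st v0));
          Q0 = (Qu st)((seed, v0) := None) in
      if length (kNN st v0) < k then
        (let K' = (kNN st)(v0 := kNN st v0 @ [(d, seed)]) in
         \<lparr>Qu = (\<lambda>(s, v). if s = seed \<and> (v0, v) \<in> E \<and> length (K' v) < k \<and> seed \<notin> S' v
                          then Some (case Q0 (s, v) of None \<Rightarrow> d + w v0 v
                                     | Some p \<Rightarrow> min p (d + w v0 v))
                          else Q0 (s, v)),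
          kNN = K', Sv = S'\<rparr>)
      else \<lparr>Qu = Q0, kNN = kNN st, Sv = S'\<rparr>)"

inductive reach :: "('a \<times> 'a) set \<Rightarrow> ('a \<Rightarrow> 'a \<Rightarrow> real) \<Rightarrow> 'a set \<Rightarrow> nat \<Rightarrow> 'a kstate \<Rightarrow> bool"
  for E w L k where
  reach_init: "reach E w L k (init_state L)"
| reach_step: "reach E w L k st \<Longrightarrow> can_pop st d seed v0 \<Longrightarrow>
                 reach E w L k (after_pop E w k st d seed v0)"

end

theory Submission
  imports Defs
begin

lemma ww_Nil[simp]: "walk_weight w [] = 0" by (simp add: walk_weight_def)
lemma ww_single[simp]: "walk_weight w [a] = 0" by (simp add: walk_weight_def)
lemma ww_Cons2[simp]: "walk_weight w (a # b # r) = w a b + walk_weight w (b # r)"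
  by (simp add: walk_weight_def)

lemma is_walk_single[simp]: "is_walk V E [a] \<longleftrightarrow> a \<in> V"
  by (simp add: is_walk_def)

lemma is_walk_Cons2[simp]:
  "is_walk V E (a # b # r) \<longleftrightarrow> a \<in> V \<and> (a, b) \<in> E \<and> is_walk V E (b # r)"
proof
  assume h: "is_walk V E (a # b # r)"
  have "(a, b) \<in> E" using h unfolding is_walk_def by (metis length_Cons nth_Cons_0 nth_Cons_Suc zero_less_Suc Suc_less_eq)
  moreover have "is_walk V E (b # r)" using h unfolding is_walk_def
    by (metis Suc_less_eq length_Cons nth_Cons_Suc list.distinct(1) set_subset_Cons subset_trans)
  ultimately show "a \<in> V \<and> (a, b) \<in> E \<and> is_walk V E (b # r)" using h by (simp add: is_walk_def)
next
  assume h: "a \<in> V \<and> (a, b) \<in> E \<and> is_walk V E (b # r)"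
  show "is_walk V E (a # b # r)" unfolding is_walk_def
  proof (intro conjI allI impI)
    show "set (a # b # r) \<subseteq> V" using h by (simp add: is_walk_def)
  next
    fix i assume "Suc i < length (a # b # r)"
    then show "((a # b # r) ! i, (a # b # r) ! Suc i) \<in> E" using h
      by (cases i) (auto simp: is_walk_def)
  qed simp
qed

lemma ww_append:
  "r \<noteq> [] \<Longrightarrow> q \<noteq> [] \<Longrightarrow> last r = hd q \<Longrightarrow>
   walk_weight w (r @ tl q) = walk_weight w r + walk_weight w q"
proof (induction r rule: induct_list012)
  case (2 x)
  then show ?case by (cases q) auto
next
  case (3 x y zs)
  then show ?case by simp
qed simp

lemma walk_append:
  "is_walk V E r \<Longrightarrow> is_walk V E q \<Longrightarrow> last r = hd q \<Longrightarrow> is_walk V E (r @ tl q)"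
proof (induction r rule: induct_list012)
  case 1
  then show ?case by (simp add: is_walk_def)
next
  case (2 x)
  then show ?case by (cases q) (auto simp: is_walk_def)
next
  case (3 x y zs)
  then show ?case by simp
qed

lemma walk_take: "is_walk V E p \<Longrightarrow> j < length p \<Longrightarrow> is_walk V E (take (Suc j) p)"
  unfolding is_walk_def by (auto dest: in_set_takeD)

lemma walk_drop: "is_walk V E p \<Longrightarrow> j < length p \<Longrightarrow> is_walk V E (drop j p)"
  unfolding is_walk_def by (auto dest: in_set_dropD)

lemma last_take_Suc: "j < length p \<Longrightarrow> last (take (Suc j) p) = p ! j"
proof -
  assume j: "j < length p"
  have "take (Suc j) p \<noteq> []" using j by (cases p) auto
  then have "last (take (Suc j) p) = take (Suc j) p ! (length (take (Suc j) p) - 1)"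
    by (rule last_conv_nth)
  also have "length (take (Suc j) p) - 1 = j" using j by simp
  also have "take (Suc j) p ! j = p ! j" by simp
  finally show ?thesis .
qed

lemma hd_take_Suc: "p \<noteq> [] \<Longrightarrow> hd (take (Suc j) p) = hd p"
  by (cases p) auto

lemma ww_split:
  assumes "j < length p"
  shows "walk_weight w p = walk_weight w (take (Suc j) p) + walk_weight w (drop j p)"
proof -
  have "take (Suc j) p @ tl (drop j p) = p"
  proof -
    have "tl (drop j p) = drop (Suc j) p" by (simp add: tl_drop drop_Suc)
    then show ?thesis by simp
  qed
  moreover have "walk_weight w (take (Suc j) p @ tl (drop j p)) =
      walk_weight w (take (Suc j) p) + walk_weight w (drop j p)"
    using assms by (intro ww_append) (auto simp: last_take_Suc hd_drop_conv_nth)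
  ultimately show ?thesis by simp
qed

lemma pre_Suc:
  "Suc i < length p \<Longrightarrow>
   walk_weight w (take (Suc (Suc i)) p) = walk_weight w (take (Suc i) p) + w (p ! i) (p ! Suc i)"
proof (induction p arbitrary: i rule: induct_list012)
  case (3 x y zs)
  then show ?case
  proof (cases i)
    case 0 then show ?thesis by simp
  next
    case (Suc i')
    with 3 show ?thesis by (cases zs) auto
  qed
qed auto

lemma ww_nonneg:
  "is_walk V E p \<Longrightarrow> (\<And>u v. (u, v) \<in> E \<Longrightarrow> 0 \<le> w u v) \<Longrightarrow> 0 \<le> walk_weight w p"
proof (induction p rule: induct_list012)
  case (3 x y zs)
  then show ?case by (metis add_nonneg_nonneg is_walk_Cons2 ww_Cons2)
qed auto

lemma pre_le_W:
  assumes "is_walk V E p" "\<And>u v. (u, v) \<in> E \<Longrightarrow> 0 \<le> w u v" "j < length p"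
  shows "walk_weight w (take (Suc j) p) \<le> walk_weight w p"
  using ww_split[OF assms(3), of w] ww_nonneg[OF walk_drop[OF assms(1,3)] assms(2)] by simp

lemma D_le_walk:
  "is_walk V E p \<Longrightarrow> hd p = u \<Longrightarrow> last p = v \<Longrightarrow> sp_dist V E w u v \<le> ereal (walk_weight w p)"
  unfolding sp_dist_def by (rule INF_lower) auto

lemma D_tri:
  assumes q: "is_walk V E q" "hd q = b" "last q = c"
  shows "sp_dist V E w a c \<le> sp_dist V E w a b + ereal (walk_weight w q)"
proof -
  have "sp_dist V E w a c - ereal (walk_weight w q) \<le> sp_dist V E w a b"
    unfolding sp_dist_def[of V E w a b]
  proof (rule INF_greatest)
    fix r assume "r \<in> {p. is_walk V E p \<and> hd p = a \<and> last p = b}"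
    then have r: "is_walk V E r" "hd r = a" "last r = b" by auto
    have qne: "q \<noteq> []" "r \<noteq> []" using q r by (auto simp: is_walk_def)
    have "sp_dist V E w a c \<le> ereal (walk_weight w (r @ tl q))"
    proof (rule D_le_walk)
      show "is_walk V E (r @ tl q)" using walk_append r q by metis
      show "hd (r @ tl q) = a" using r qne by simp
      show "last (r @ tl q) = c" using r q qne
      proof (cases "tl q = []")
        case True
        then have "q = [hd q]" using qne by (metis list.collapse)
        then show ?thesis using True r q qne by (metis append_Nil2 last.simps)
      next
        case False
        then show ?thesis using q by (simp add: last_tl)
      qed
    qed
    also have "\<dots> = ereal (walk_weight w r) + ereal (walk_weight w q)"
      using ww_append[of r q w] r q qne by simp
    finally show "sp_dist V E w a c - ereal (walk_weight w q) \<le> ereal (walk_weight w r)"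
      by (simp add: ereal_minus_le)
  qed
  then show ?thesis by (simp add: ereal_minus_le)
qed


lemma Sv_ap: "Sv (after_pop E w k st d seed v0) x = (if x = v0 then insert seed (Sv st x) else Sv st x)"
  by (simp add: after_pop_def Let_def)

lemma kNN_ap: "kNN (after_pop E w k st d seed v0) x =
   (if x = v0 \<and> length (kNN st v0) < k then kNN st x @ [(d, seed)] else kNN st x)"
  by (simp add: after_pop_def Let_def)

lemma Qu_ap: "Qu (after_pop E w k st d seed v0) (s, y) =
  (if length (kNN st v0) < k \<and> s = seed \<and> (v0, y) \<in> E \<and> length (kNN (after_pop E w k st d seed v0) y) < k
      \<and> seed \<notin> Sv (after_pop E w k st d seed v0) y
   then Some (case ((Qu st)((seed, v0) := None)) (s, y) of None \<Rightarrow> d + w v0 y | Some p \<Rightarrow> min p (d + w v0 y))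
   else ((Qu st)((seed, v0) := None)) (s, y))"
  by (simp add: after_pop_def Let_def)

lemma Qu_ap_old:
  assumes "Qu st pq = Some q" "pq \<noteq> (seed, v0)"
  shows "\<exists>q'\<le>q. Qu (after_pop E w k st d seed v0) pq = Some q'"
proof -
  obtain s y where pq: "pq = (s, y)" by fastforce
  show ?thesis using assms unfolding pq by (auto simp: Qu_ap simp del: fun_upd_apply split: option.split) (auto simp: fun_upd_apply)
qed

lemma Qu_ap_new:
  assumes "length (kNN st v0) < k" "(v0, y) \<in> E" "seed \<notin> Sv (after_pop E w k st d seed v0) y"
    "length (kNN (after_pop E w k st d seed v0) y) < k"
  shows "\<exists>q'\<le>d + w v0 y. Qu (after_pop E w k st d seed v0) (seed, y) = Some q'"
  using assms by (auto simp: Qu_ap split: option.split)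

lemma Qu_ap_cases:
  assumes "Qu (after_pop E w k st d seed v0) (s, y) = Some q"
  shows "((s, y) \<noteq> (seed, v0) \<and> Qu st (s, y) = Some q) \<or>
     (s = seed \<and> (v0, y) \<in> E \<and> seed \<notin> Sv (after_pop E w k st d seed v0) y \<and>
       (q = d + w v0 y \<or> (\<exists>q0. Qu st (s, y) = Some q0 \<and> q = min q0 (d + w v0 y))))"
  using assms by (auto simp: Qu_ap split: if_splits option.splits)

locale kg =
  fixes V :: "'a set" and E :: "('a \<times> 'a) set" and w :: "'a \<Rightarrow> 'a \<Rightarrow> real"
    and L :: "'a set" and k :: nat
  assumes finV: "finite V" and EV: "E \<subseteq> V \<times> V"
    and wnn: "\<And>u v. (u, v) \<in> E \<Longrightarrow> 0 \<le> w u v" and LV: "L \<subseteq> V"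
begin

abbreviation "D \<equiv> sp_dist V E w"
abbreviation "WW \<equiv> walk_weight w"

definition gw :: "'a \<Rightarrow> 'a \<Rightarrow> 'a list \<Rightarrow> bool" where
  "gw s v p \<longleftrightarrow> s \<in> L \<and> is_walk V E p \<and> hd p = s \<and> last p = v \<and>
     card {s'\<in>L. D s' v \<le> ereal (WW p)} \<le> k"

lemma finL: "finite L" using finV LV finite_subset by blast

lemma gw_prefix:
  assumes "gw s v p" "j < length p"
  shows "gw s (p ! j) (take (Suc j) p)"
proof -
  have p: "s \<in> L" "is_walk V E p" "hd p = s" "last p = v"
    and c: "card {s'\<in>L. D s' v \<le> ereal (WW p)} \<le> k" using assms(1) gw_def by auto
  have pne: "p \<noteq> []" using p by (auto simp: is_walk_def)
  have sub: "{s'\<in>L. D s' (p ! j) \<le> ereal (WW (take (Suc j) p))} \<subseteq> {s'\<in>L. D s' v \<le> ereal (WW p)}"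
  proof safe
    fix s' assume s': "s' \<in> L" "D s' (p ! j) \<le> ereal (WW (take (Suc j) p))"
    have "D s' v \<le> D s' (p ! j) + ereal (WW (drop j p))"
      by (rule D_tri) (use walk_drop[OF p(2) assms(2)] assms(2) p pne in \<open>auto simp: hd_drop_conv_nth\<close>)
    also have "\<dots> \<le> ereal (WW (take (Suc j) p)) + ereal (WW (drop j p))"
      using s'(2) by (rule add_right_mono)
    also have "\<dots> = ereal (WW p)" using ww_split[OF assms(2), of w] by simp
    finally show "D s' v \<le> ereal (WW p)" .
  qed
  have "card {s'\<in>L. D s' (p ! j) \<le> ereal (WW (take (Suc j) p))} \<le> card {s'\<in>L. D s' v \<le> ereal (WW p)}"
    by (rule card_mono) (use finL sub in auto)
  then show ?thesis unfolding gw_def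
    using p c walk_take[OF p(2) assms(2)] last_take_Suc[OF assms(2)] hd_take_Suc[OF pne] by auto
qed

lemma card_lt:
  assumes "distinct (map snd xs)"
    "\<And>d' s'. (d', s') \<in> set xs \<Longrightarrow> s' \<in> L \<and> D s' z \<le> B \<and> s' \<noteq> s"
    "s \<in> L" "D s z \<le> B" "card {s'\<in>L. D s' z \<le> B} \<le> k"
  shows "length xs < k"
proof -
  have sub: "insert s (snd ` set xs) \<subseteq> {s'\<in>L. D s' z \<le> B}" using assms(2-4) by auto
  have "card (insert s (snd ` set xs)) \<le> card {s'\<in>L. D s' z \<le> B}"
    by (rule card_mono) (use finL sub in auto)
  moreover have "s \<notin> snd ` set xs" using assms(2) by force
  moreover have "card (snd ` set xs) = length xs"
    using distinct_card[OF assms(1)] by simp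
  ultimately show ?thesis using assms(5) by simp
qed

definition invQ :: "'a kstate \<Rightarrow> bool" where
  "invQ st \<longleftrightarrow> (\<forall>s v q. Qu st (s, v) = Some q \<longrightarrow> s \<in> L \<and> v \<in> V \<and> D s v \<le> ereal q \<and> s \<notin> Sv st v)"
definition invS :: "'a kstate \<Rightarrow> bool" where
  "invS st \<longleftrightarrow> (\<forall>s\<in>L. s \<in> Sv st s \<or> (\<exists>q. q \<le> 0 \<and> Qu st (s, s) = Some q))"
definition invK :: "'a kstate \<Rightarrow> bool" where
  "invK st \<longleftrightarrow> (\<forall>x d s'. (d, s') \<in> set (kNN st x) \<longrightarrow> s' \<in> L \<and> D s' x \<le> ereal d \<and> s' \<in> Sv st x)"
definition invD :: "'a kstate \<Rightarrow> bool" where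
  "invD st \<longleftrightarrow> (\<forall>x. distinct (map snd (kNN st x)))"
definition invM :: "'a kstate \<Rightarrow> bool" where
  "invM st \<longleftrightarrow> (\<forall>x d s' pq q. (d, s') \<in> set (kNN st x) \<longrightarrow> Qu st pq = Some q \<longrightarrow> d \<le> q)"
definition invR :: "'a kstate \<Rightarrow> bool" where
  "invR st \<longleftrightarrow> (\<forall>x y d s. (d, s) \<in> set (kNN st x) \<longrightarrow> (x, y) \<in> E \<longrightarrow>
     s \<in> Sv st y \<or> (\<exists>q. Qu st (s, y) = Some q \<and> q \<le> d + w x y) \<or>
     k \<le> length (filter (\<lambda>e. fst e \<le> d) (kNN st y)))"
definition invI :: "'a kstate \<Rightarrow> bool" where
  "invI st \<longleftrightarrow> (\<forall>s v p. gw s v p \<longrightarrow> s \<in> Sv st v \<longrightarrow> (\<exists>d. d \<le> WW p \<and> (d, s) \<in> set (kNN st v)))"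
definition inv :: "'a kstate \<Rightarrow> bool" where
  "inv st \<longleftrightarrow> invQ st \<and> invS st \<and> invK st \<and> invD st \<and> invM st \<and> invR st \<and> invI st"

lemma frontier:
  assumes I: "inv st" and g: "gw s v p" and nv: "s \<notin> Sv st v"
  shows "\<exists>i<length p. \<exists>q. Qu st (s, p ! i) = Some q \<and> q \<le> WW p"
proof -
  have p: "s \<in> L" "is_walk V E p" "hd p = s" "last p = v" using g gw_def by auto
  have pne: "p \<noteq> []" using p by (auto simp: is_walk_def)
  define P where "P i \<longleftrightarrow> i < length p \<and> s \<notin> Sv st (p ! i)" for i
  have P0: "P (length p - 1)" using nv p pne by (simp add: P_def last_conv_nth)
  define i where "i = (LEAST i. P i)"
  have Pi: "P i" unfolding i_def by (rule LeastI) (rule P0)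
  have ii: "i < length p" "s \<notin> Sv st (p ! i)" using Pi P_def by auto
  have before: "s \<in> Sv st (p ! j)" if "j < i" for j
  proof -
    have "\<not> P j" using not_less_Least[of j P] that unfolding i_def by blast
    then show ?thesis using that ii P_def by auto
  qed
  have W0: "0 \<le> WW p" using ww_nonneg[OF p(2)] wnn by blast
  show ?thesis
  proof (cases i)
    case 0
    then have "p ! i = s" using p pne by (simp add: hd_conv_nth)
    with ii have "s \<notin> Sv st s" by simp
    with I p obtain q where "q \<le> 0" "Qu st (s, s) = Some q" by (auto simp: inv_def invS_def)
    then show ?thesis using \<open>p ! i = s\<close> ii W0 by (intro exI[of _ i]) auto
  next
    case (Suc i')
    have si': "s \<in> Sv st (p ! i')" using before Suc by simp
    have g': "gw s (p ! i') (take (Suc i') p)" using gw_prefix g ii Suc by simp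
    obtain d where d: "d \<le> WW (take (Suc i') p)" "(d, s) \<in> set (kNN st (p ! i'))"
      using I g' si' unfolding inv_def invI_def by blast
    have e: "(p ! i', p ! i) \<in> E" using p(2) ii Suc unfolding is_walk_def by auto
    have pre: "WW (take (Suc i) p) = WW (take (Suc i') p) + w (p ! i') (p ! i)"
      using pre_Suc[of i' p w] Suc ii by simp
    have preW: "WW (take (Suc i) p) \<le> WW p" using pre_le_W[OF p(2) _ ii(1)] wnn by blast
    have "s \<in> Sv st (p ! i) \<or> (\<exists>q. Qu st (s, p ! i) = Some q \<and> q \<le> d + w (p ! i') (p ! i)) \<or>
       k \<le> length (filter (\<lambda>e. fst e \<le> d) (kNN st (p ! i)))"
      using I d(2) e unfolding inv_def invR_def by blast
    then show ?thesis
    proof (elim disjE)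
      assume "s \<in> Sv st (p ! i)" with ii show ?thesis by simp
    next
      assume "\<exists>q. Qu st (s, p ! i) = Some q \<and> q \<le> d + w (p ! i') (p ! i)"
      then obtain q where "Qu st (s, p ! i) = Some q" "q \<le> d + w (p ! i') (p ! i)" by blast
      then show ?thesis using d(1) pre preW ii by (intro exI[of _ i]) auto
    next
      assume full: "k \<le> length (filter (\<lambda>e. fst e \<le> d) (kNN st (p ! i)))"
      let ?F = "filter (\<lambda>e. fst e \<le> d) (kNN st (p ! i))"
      have ww: "0 \<le> w (p ! i') (p ! i)" using wnn e by blast
      have "length ?F < k"
      proof (rule card_lt)
        show "distinct (map snd ?F)" using I by (auto simp: inv_def invD_def distinct_map_filter)
      next
        fix d' s' assume "(d', s') \<in> set ?F"
        then have "(d', s') \<in> set (kNN st (p ! i))" "d' \<le> d" by auto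
        then have "s' \<in> L" "D s' (p ! i) \<le> ereal d'" "s' \<in> Sv st (p ! i)"
          using I unfolding inv_def invK_def by blast+
        moreover have "ereal d' \<le> ereal (WW (take (Suc i) p))"
          using \<open>d' \<le> d\<close> d(1) pre ww by simp
        ultimately show "s' \<in> L \<and> D s' (p ! i) \<le> ereal (WW (take (Suc i) p)) \<and> s' \<noteq> s"
          using ii order_trans[of "D s' (p ! i)" "ereal d'"] by blast
      next
        show "s \<in> L" by (rule p(1))
        show "D s (p ! i) \<le> ereal (WW (take (Suc i) p))"
          using D_le_walk[OF walk_take[OF p(2) ii(1)] hd_take_Suc[OF pne] last_take_Suc[OF ii(1)]] p
          by simp
        show "card {s'\<in>L. D s' (p ! i) \<le> ereal (WW (take (Suc i) p))} \<le> k"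
          using gw_prefix[OF g ii(1)] gw_def by blast
      qed
      with full show ?thesis by simp
    qed
  qed
qed


lemma inv_init: "inv (init_state L)"
proof -
  have "invQ (init_state L)" unfolding invQ_def
  proof (intro allI impI)
    fix s v q assume "Qu (init_state L) (s, v) = Some q"
    then have h: "s \<in> L" "v = s" "q = 0" by (auto simp: init_state_def split: if_splits)
    then have "s \<in> V" using LV by auto
    then have "D s s \<le> ereal (WW [s])" by (intro D_le_walk) auto
    then show "s \<in> L \<and> v \<in> V \<and> D s v \<le> ereal q \<and> s \<notin> Sv (init_state L) v"
      using h \<open>s \<in> V\<close> by (simp add: init_state_def)
  qed
  moreover have "invS (init_state L)" by (auto simp: invS_def init_state_def)
  ultimately show ?thesis
    by (auto simp: inv_def invK_def invD_def invM_def invR_def invI_def init_state_def)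
qed

lemma inv_step:
  assumes I: "inv st" and cp: "can_pop st d seed v0"
  shows "inv (after_pop E w k st d seed v0)"
proof -
  let ?st = "after_pop E w k st d seed v0"
  have IQ: "invQ st" and IS: "invS st" and IK: "invK st" and ID: "invD st" and IM: "invM st"
    and IR: "invR st" and II: "invI st" using I by (auto simp: inv_def)
  have Qd: "Qu st (seed, v0) = Some d" and Qmin: "\<And>pq q. Qu st pq = Some q \<Longrightarrow> d \<le> q"
    using cp by (auto simp: can_pop_def)
  have seedL: "seed \<in> L" and v0V: "v0 \<in> V" and Dsd: "D seed v0 \<le> ereal d" and sns: "seed \<notin> Sv st v0"
    using IQ Qd unfolding invQ_def by blast+
  have kd: "d' \<le> d" if "(d', s') \<in> set (kNN st x)" for x d' s'
    using IM Qd that unfolding invM_def by blast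
  have Ssub: "Sv st x \<subseteq> Sv ?st x" for x by (auto simp: Sv_ap)
  have Ksub: "set (kNN st x) \<subseteq> set (kNN ?st x)" for x by (auto simp: kNN_ap)
  have Kcases: "(d', s') \<in> set (kNN st x) \<or> (x = v0 \<and> d' = d \<and> s' = seed \<and> length (kNN st v0) < k)"
    if "(d', s') \<in> set (kNN ?st x)" for x d' s'
    using that by (auto simp: kNN_ap split: if_splits)
  have Qge: "d \<le> q" if "Qu ?st (s, y) = Some q" for s y q
    using Qu_ap_cases[OF that] Qmin wnn[of v0 y] by auto
  have Dnew: "D seed y \<le> ereal (d + w v0 y)" if "(v0, y) \<in> E" for y
  proof -
    have yV: "y \<in> V" using EV that by auto
    have "D seed y \<le> D seed v0 + ereal (WW [v0, y])"
      by (rule D_tri) (use that v0V yV in auto)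
    also have "\<dots> \<le> ereal d + ereal (w v0 y)" using add_right_mono[OF Dsd, of "ereal (w v0 y)"] by simp
    finally show ?thesis by simp
  qed
  have "invQ ?st" unfolding invQ_def
  proof (intro allI impI)
    fix s v q assume h: "Qu ?st (s, v) = Some q"
    from Qu_ap_cases[OF h] show "s \<in> L \<and> v \<in> V \<and> D s v \<le> ereal q \<and> s \<notin> Sv ?st v"
    proof (rule disjE)
      assume "(s, v) \<noteq> (seed, v0) \<and> Qu st (s, v) = Some q"
      then show ?thesis using IQ unfolding invQ_def by (auto simp: Sv_ap)
    next
      assume aa: "s = seed \<and> (v0, v) \<in> E \<and> seed \<notin> Sv ?st v \<and>
        (q = d + w v0 v \<or> (\<exists>q0. Qu st (s, v) = Some q0 \<and> q = min q0 (d + w v0 v)))"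
      then have a: "s = seed" "(v0, v) \<in> E" "seed \<notin> Sv ?st v"
        "q = d + w v0 v \<or> (\<exists>q0. Qu st (s, v) = Some q0 \<and> q = min q0 (d + w v0 v))" by auto
      have vV: "v \<in> V" using EV a(2) by auto
      have "D s v \<le> ereal q"
        using a(4)
      proof
        assume "q = d + w v0 v" then show ?thesis using Dnew[OF a(2)] a(1) by simp
      next
        assume "\<exists>q0. Qu st (s, v) = Some q0 \<and> q = min q0 (d + w v0 v)"
        then obtain q0 where "Qu st (s, v) = Some q0" "q = min q0 (d + w v0 v)" by blast
        moreover then have "D s v \<le> ereal q0" using IQ unfolding invQ_def by blast
        ultimately show ?thesis using Dnew[OF a(2)] a(1) by (auto simp: min_def)
      qed
      then show ?thesis using a seedL vV by simp
    qed
  qed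
  moreover have "invS ?st" unfolding invS_def
  proof
    fix s assume sL: "s \<in> L"
    show "s \<in> Sv ?st s \<or> (\<exists>q. q \<le> 0 \<and> Qu ?st (s, s) = Some q)"
    proof (cases "s \<in> Sv st s")
      case True then show ?thesis using Ssub by blast
    next
      case False
      then obtain q where q: "q \<le> 0" "Qu st (s, s) = Some q" using IS sL unfolding invS_def by blast
      show ?thesis
      proof (cases "(s, s) = (seed, v0)")
        case True then show ?thesis by (auto simp: Sv_ap)
      next
        case False
        then show ?thesis using Qu_ap_old[OF q(2) False, where E=E and w=w and k=k and d=d] q(1) by force
      qed
    qed
  qed
  moreover have "invK ?st" unfolding invK_def
  proof (intro allI impI)
    fix x d' s' assume "(d', s') \<in> set (kNN ?st x)"
    from Kcases[OF this] show "s' \<in> L \<and> D s' x \<le> ereal d' \<and> s' \<in> Sv ?st x"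
      using IK Ssub seedL Dsd unfolding invK_def by (auto simp: Sv_ap)
  qed
  moreover have "invD ?st" unfolding invD_def
  proof
    fix x
    have "seed \<notin> snd ` set (kNN st v0)" using IK sns unfolding invK_def by force
    then show "distinct (map snd (kNN ?st x))" using ID unfolding invD_def by (auto simp: kNN_ap)
  qed
  moreover have "invM ?st" unfolding invM_def
  proof (intro allI impI)
    fix x d' s' pq q assume a: "(d', s') \<in> set (kNN ?st x)" "Qu ?st pq = Some q"
    obtain s y where pq: "pq = (s, y)" by fastforce
    have "d' \<le> d" using Kcases[OF a(1)] kd by blast
    then show "d' \<le> q" using Qge[of s y q] a(2) pq by simp
  qed
  moreover have "invR ?st" unfolding invR_def
  proof (intro allI impI)
    fix x y d' s assume a: "(d', s) \<in> set (kNN ?st x)" "(x, y) \<in> E"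
    show "s \<in> Sv ?st y \<or> (\<exists>q. Qu ?st (s, y) = Some q \<and> q \<le> d' + w x y) \<or>
       k \<le> length (filter (\<lambda>e. fst e \<le> d') (kNN ?st y))"
      using Kcases[OF a(1)]
    proof
      assume old: "(d', s) \<in> set (kNN st x)"
      have "s \<in> Sv st y \<or> (\<exists>q. Qu st (s, y) = Some q \<and> q \<le> d' + w x y) \<or>
        k \<le> length (filter (\<lambda>e. fst e \<le> d') (kNN st y))"
        using IR old a(2) unfolding invR_def by blast
      then show ?thesis
      proof (elim disjE)
        assume "s \<in> Sv st y" then show ?thesis using Ssub by blast
      next
        assume "\<exists>q. Qu st (s, y) = Some q \<and> q \<le> d' + w x y"
        then obtain q where q: "Qu st (s, y) = Some q" "q \<le> d' + w x y" by blast
        show ?thesis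
        proof (cases "(s, y) = (seed, v0)")
          case True then show ?thesis by (auto simp: Sv_ap)
        next
          case False
          then show ?thesis using Qu_ap_old[OF q(1) False, where E=E and w=w and k=k and d=d] q(2) by force
        qed
      next
        assume "k \<le> length (filter (\<lambda>e. fst e \<le> d') (kNN st y))"
        then show ?thesis by (auto simp: kNN_ap)
      qed
    next
      assume new: "x = v0 \<and> d' = d \<and> s = seed \<and> length (kNN st v0) < k"
      show ?thesis
      proof (cases "seed \<in> Sv ?st y")
        case True then show ?thesis using new by simp
      next
        case nS: False
        show ?thesis
        proof (cases "length (kNN ?st y) < k")
          case True
          have "\<exists>q'\<le>d + w v0 y. Qu ?st (seed, y) = Some q'"
            by (rule Qu_ap_new) (use new a(2) nS True in auto)
          then show ?thesis using new by auto
        next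
          case False
          have "\<forall>e\<in>set (kNN ?st y). fst e \<le> d"
          proof
            fix e assume "e \<in> set (kNN ?st y)"
            then have "(fst e, snd e) \<in> set (kNN ?st y)" by simp
            from Kcases[OF this] show "fst e \<le> d" using kd by (metis prod.collapse order_refl)
          qed
          then have "filter (\<lambda>e. fst e \<le> d') (kNN ?st y) = kNN ?st y" using new by simp
          then show ?thesis using False by simp
        qed
      qed
    qed
  qed
  moreover have "invI ?st" unfolding invI_def
  proof (intro allI impI)
    fix s v p assume g: "gw s v p" and sv: "s \<in> Sv ?st v"
    show "\<exists>d'. d' \<le> WW p \<and> (d', s) \<in> set (kNN ?st v)"
    proof (cases "s \<in> Sv st v")
      case True
      then show ?thesis using II g Ksub unfolding invI_def by blast
    next
      case False
      then have sv0: "s = seed" "v = v0" using sv by (auto simp: Sv_ap split: if_splits)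
      obtain i q where "i < length p" "Qu st (s, p ! i) = Some q" "q \<le> WW p"
        using frontier[OF I g False] by blast
      then have dW: "d \<le> WW p" using Qmin by force
      have p: "is_walk V E p" "hd p = s" "last p = v" using g gw_def by auto
      have "length (kNN st v0) < k"
      proof (rule card_lt)
        show "distinct (map snd (kNN st v0))" using ID unfolding invD_def by blast
      next
        fix d' s' assume h: "(d', s') \<in> set (kNN st v0)"
        then have "s' \<in> L" "D s' v0 \<le> ereal d'" "s' \<in> Sv st v0" using IK unfolding invK_def by blast+
        moreover have "d' \<le> WW p" using kd[OF h] dW by simp
        ultimately show "s' \<in> L \<and> D s' v0 \<le> ereal (WW p) \<and> s' \<noteq> seed"
          using sns order_trans[of "D s' v0" "ereal d'"] by auto
      next
        show "seed \<in> L" by (rule seedL)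
        show "D seed v0 \<le> ereal (WW p)" using D_le_walk[OF p] sv0 by simp
        show "card {s'\<in>L. D s' v0 \<le> ereal (WW p)} \<le> k" using g sv0 gw_def by blast
      qed
      then have "(d, seed) \<in> set (kNN ?st v0)" by (simp add: kNN_ap)
      then show ?thesis using dW sv0 by blast
    qed
  qed
  ultimately show ?thesis unfolding inv_def by blast
qed

lemma reach_inv: "reach E w L k st \<Longrightarrow> inv st"
  by (induction rule: reach.induct) (auto intro: inv_init inv_step)

end

theorem lemmaB4:
  fixes V :: "'a set" and E :: "('a \<times> 'a) set" and w :: "'a \<Rightarrow> 'a \<Rightarrow> real"
    and L :: "'a set" and k :: nat and dst :: real and st :: "'a kstate"
  assumes "finite V"
    and "E \<subseteq> V \<times> V"
    and "\<And>u v. (u, v) \<in> E \<Longrightarrow> (v, u) \<in> E"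
    and "\<And>u v. (u, v) \<in> E \<Longrightarrow> w u v = w v u"
    and "\<And>u v. (u, v) \<in> E \<Longrightarrow> 0 \<le> w u v"
    and "L \<subseteq> V"
    and "1 \<le> k"
    and "reach E w L k st"
    and "can_pop st dst seed v0"
  shows "(seed \<in> NLV V E w L v0 k \<longrightarrow> ereal dst = sp_dist V E w seed v0) \<and>
         (\<forall>s\<in>L. \<forall>v\<in>V. sp_dist V E w s v < ereal dst \<and> s \<in> NLV V E w L v k \<longrightarrow> s \<in> Sv st v)"
proof -
  interpret kg V E w L k using assms by unfold_locales auto
  have I: "inv st" using assms(8) by (rule reach_inv)
  have cp: "Qu st (seed, v0) = Some dst" "\<And>pq q. Qu st pq = Some q \<Longrightarrow> dst \<le> q"
    using assms(9) by (auto simp: can_pop_def)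
  have C2: "\<forall>s\<in>L. \<forall>v\<in>V. D s v < ereal dst \<and> s \<in> NLV V E w L v k \<longrightarrow> s \<in> Sv st v"
  proof (intro ballI impI)
    fix s v assume sL: "s \<in> L" and vV: "v \<in> V" and h: "D s v < ereal dst \<and> s \<in> NLV V E w L v k"
    show "s \<in> Sv st v"
    proof (rule ccontr)
      assume nv: "s \<notin> Sv st v"
      define T where "T = {t \<in> (\<lambda>s'. D s' v) ` L. D s v < t}"
      define g where "g = Min (insert (ereal dst) T)"
      have finT: "finite T" unfolding T_def using finL by auto
      have lt: "D s v < g" unfolding g_def using finT h by (auto simp: T_def)
      have gd: "g \<le> ereal dst" unfolding g_def using finT by simp
      obtain p where p: "is_walk V E p" "hd p = s" "last p = v" "ereal (WW p) < g"
        using lt unfolding sp_dist_def[of V E w s v] by (auto simp: INF_less_iff)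
      have sub: "{s'\<in>L. D s' v \<le> ereal (WW p)} \<subseteq> {s'\<in>L. D s' v \<le> D s v}"
      proof safe
        fix s' assume s': "s' \<in> L" "D s' v \<le> ereal (WW p)"
        show "D s' v \<le> D s v"
        proof (rule ccontr)
          assume "\<not> D s' v \<le> D s v"
          then have "D s' v \<in> T" using s' by (auto simp: T_def)
          then have "g \<le> D s' v" unfolding g_def using finT by simp
          then show False using s' p(4) by simp
        qed
      qed
      have "card {s'\<in>L. D s' v \<le> ereal (WW p)} \<le> card {s'\<in>L. D s' v \<le> D s v}"
        by (rule card_mono) (use finL sub in auto)
      also have "\<dots> \<le> k" using h by (simp add: NLV_def)
      finally have "gw s v p" unfolding gw_def using sL p by simp
      then obtain i q where "i < length p" "Qu st (s, p ! i) = Some q" "q \<le> WW p"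
        using frontier[OF I _ nv] by blast
      moreover have "ereal (WW p) < ereal dst" using p(4) gd by (rule less_le_trans)
      then have "WW p < dst" by simp
      ultimately show False using cp(2) by force
    qed
  qed
  have "seed \<in> L" "v0 \<in> V" "D seed v0 \<le> ereal dst" "seed \<notin> Sv st v0"
    using I cp(1) unfolding inv_def invQ_def by blast+
  then have C1: "seed \<in> NLV V E w L v0 k \<longrightarrow> ereal dst = D seed v0"
    using C2 by (meson antisym not_le)
  show ?thesis using C1 C2 by blast
qed

end
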